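(* Let $n\ge 5$ be an integer with $n\equiv 1\pmod 4$, let $\Delta_n(u,v)=(n-1)^{n-1}u^n+n^nv^{n-1}$, and let $\ell$ be an odd prime. Define $$ S_n(\ell)=\sum_{u=1}^{\ell}\sum_{v=1}^{\ell}\left(\frac{\Delta_n(u,v)}{\ell}\right). $$ Then $|S_n(\ell)|\le c\,\ell$ for some constant $c>0$ depending only on $n$.
   Context: $\left(\frac{w}{\ell}\right)$ denotes the Legendre (Jacobi) symbol of $w$ modulo $\ell$. The polynomial $\Delta_n(u,v)$ is the discriminant of $t^n+ut+v$ when $n\equiv1\pmod4$. *)

theory Defs
  imports "HOL-Number_Theory.Number_Theory"
begin

text \<open>Discriminant of t^n + u t + v (for n = 1 mod 4), as an integer polynomial in u, v.\<close>
definition Delta :: "nat \<Rightarrow> int \<Rightarrow> int \<Rightarrow> int" where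
  "Delta n u v = (int n - 1) ^ (n - 1) * u ^ n + (int n) ^ n * v ^ (n - 1)"

definition S :: "nat \<Rightarrow> int \<Rightarrow> int" where
  "S n l = (\<Sum>u = 1..l. \<Sum>v = 1..l. Legendre (Delta n u v) l)"

end

theory Submission
  imports Defs
begin

lemma Leg_cong:
  assumes "[a = b] (mod p)"
  shows "Legendre a p = Legendre b p"
proof -
  have 1: "[a = 0] (mod p) \<longleftrightarrow> [b = 0] (mod p)"
    using assms cong_sym cong_trans by blast
  have 2: "QuadRes p a \<longleftrightarrow> QuadRes p b"
    unfolding QuadRes_def using assms cong_sym cong_trans by blast
  show ?thesis unfolding Legendre_def using 1 2 by simp
qed

lemma Leg_mod: "Legendre (a mod p) p = Legendre a p"
  by (rule Leg_cong) (simp add: cong_def)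

lemma Leg_vals: "Legendre a p \<in> {-1, 0, 1}"
  unfolding Legendre_def by auto

lemma Leg_zero_iff: "Legendre a p = 0 \<longleftrightarrow> p dvd a"
  unfolding Legendre_def by (auto simp: cong_0_iff)

lemma small_cong_eq:
  fixes x y p :: int
  assumes "x \<in> {-1,0,1}" "y \<in> {-1,0,1}" "p > 2" "[x = y] (mod p)"
  shows "x = y"
proof -
  have d: "p dvd x - y" using assms(4) cong_iff_dvd_diff by blast
  have "\<bar>x - y\<bar> \<le> 2" using assms(1,2) by auto
  show ?thesis
  proof (rule ccontr)
    assume "x \<noteq> y"
    hence "\<bar>x - y\<bar> > 0" by simp
    hence "p \<le> \<bar>x - y\<bar>" using d by (simp add: zdvd_imp_le)
    thus False using \<open>\<bar>x - y\<bar> \<le> 2\<close> assms(3) by simp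
  qed
qed

lemma Leg_mult:
  fixes p :: int
  assumes "prime p" "p > 2"
  shows "Legendre (a * b) p = Legendre a p * Legendre b p"
proof -
  define q where "q = nat p"
  have q: "p = int q" using assms(2) q_def by simp
  have qp: "prime q" using assms(1) q by simp
  have q2: "2 < q" using assms(2) q by simp
  let ?k = "(q - 1) div 2"
  have "[Legendre (a*b) p = (a*b) ^ ?k] (mod p)"
    using euler_criterion[OF qp q2] q by simp
  moreover have "[Legendre a p * Legendre b p = a ^ ?k * b ^ ?k] (mod p)"
    using euler_criterion[OF qp q2, of a] euler_criterion[OF qp q2, of b] cong_mult q by auto
  ultimately have "[Legendre (a*b) p = Legendre a p * Legendre b p] (mod p)"
    by (simp add: power_mult_distrib) (meson cong_sym cong_trans)
  moreover have "Legendre a p * Legendre b p \<in> {-1,0,1}"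
    using Leg_vals[of a p] Leg_vals[of b p] by auto
  ultimately show ?thesis using small_cong_eq Leg_vals assms(2) by blast
qed


lemma Leg_one: "p > 1 \<Longrightarrow> Legendre 1 p = 1"
proof -
  assume "p > 1"
  hence "\<not> [1 = 0] (mod p)" by (simp add: cong_0_iff zdvd_not_zless)
  moreover have "QuadRes p 1" unfolding QuadRes_def by (rule exI[of _ 1]) simp
  ultimately show ?thesis unfolding Legendre_def by simp
qed

lemma Leg_pow:
  fixes p :: int
  assumes "prime p" "p > 2"
  shows "Legendre (a ^ k) p = Legendre a p ^ k"
  by (induction k) (use assms in \<open>simp_all add: Leg_one Leg_mult\<close>)

lemma prime_coprime_int:
  fixes p c :: int
  assumes "prime p" "\<not> p dvd c"
  shows "coprime c p"
  using assms prime_imp_coprime coprime_commute by blast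

lemma affine_sum:
  fixes p c d :: int and f :: "int \<Rightarrow> 'a::comm_monoid_add"
  assumes "prime p" "\<not> p dvd c" "\<And>x. f (x mod p) = f x"
  shows "(\<Sum>x\<in>{0..<p}. f (c*x+d)) = (\<Sum>x\<in>{0..<p}. f x)"
proof -
  have p0: "p > 0" using assms(1) prime_gt_0_int by blast
  define h where "h x = (c*x+d) mod p" for x
  have inj: "inj_on h {0..<p}"
  proof (rule inj_onI)
    fix x y assume x: "x \<in> {0..<p}" and y: "y \<in> {0..<p}" and e: "h x = h y"
    hence "[c*x+d = c*y+d] (mod p)" unfolding h_def cong_def by simp
    hence "[c*x = c*y] (mod p)" using cong_add_rcancel by blast
    hence "[x = y] (mod p)" using cong_mult_lcancel prime_coprime_int[OF assms(1,2)] by blast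
    thus "x = y" using x y cong_less_imp_eq_int by auto
  qed
  have sub: "h ` {0..<p} \<subseteq> {0..<p}" unfolding h_def using p0 by auto
  have eq: "h ` {0..<p} = {0..<p}" using endo_inj_surj[OF _ sub inj] by simp
  have "(\<Sum>x\<in>{0..<p}. f x) = (\<Sum>y\<in>h ` {0..<p}. f y)" using eq by simp
  also have "\<dots> = (\<Sum>x\<in>{0..<p}. f (h x))" using sum.reindex[OF inj] by simp
  also have "\<dots> = (\<Sum>x\<in>{0..<p}. f (c*x+d))" unfolding h_def using assms(3) by simp
  finally show ?thesis by simp
qed

lemma nonresidue_exists:
  fixes p :: int
  assumes "prime p" "p > 2"
  shows "\<exists>g. \<not> p dvd g \<and> \<not> QuadRes p g"
proof (rule ccontr)
  assume na: "\<not> ?thesis"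
  define h where "h y = y^2 mod p" for y :: int
  define H where "H = {1..(p-1) div 2}"
  have "{1..<p} \<subseteq> h ` H"
  proof
    fix x assume x: "x \<in> {1..<p}"
    hence "\<not> p dvd x" using zdvd_not_zless by auto
    hence "QuadRes p x" using na by blast
    then obtain y where y: "[y^2 = x] (mod p)" unfolding QuadRes_def by blast
    define y0 where "y0 = y mod p"
    have y0r: "0 \<le> y0" "y0 < p" unfolding y0_def using assms by auto
    have "[y0^2 = y^2] (mod p)" unfolding y0_def by (simp add: cong_def power_mod)
    hence y0c: "[y0^2 = x] (mod p)" using y cong_trans by blast
    have "y0 \<noteq> 0"
    proof
      assume "y0 = 0"
      hence "[x = 0] (mod p)" using y0c by (simp add: cong_sym)
      thus False using \<open>\<not> p dvd x\<close> by (simp add: cong_0_iff)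
    qed
    have xm: "x mod p = x" using x by simp
    show "x \<in> h ` H"
    proof (cases "y0 \<le> (p-1) div 2")
      case True
      hence "y0 \<in> H" unfolding H_def using \<open>y0 \<noteq> 0\<close> y0r by auto
      moreover have "h y0 = x" unfolding h_def using y0c xm by (simp add: cong_def)
      ultimately show ?thesis by blast
    next
      case False
      define y1 where "y1 = p - y0"
      have "odd p" using prime_odd_int assms by blast
      hence "y1 \<in> H" unfolding H_def y1_def using False y0r assms(2) by (auto elim!: oddE)
      moreover have "[y1^2 = y0^2] (mod p)"
      proof -
        have "y1^2 = y0^2 + p * (p - 2*y0)" unfolding y1_def by (simp add: power2_eq_square algebra_simps)
        thus ?thesis by (simp add: cong_def)
      qed
      hence "h y1 = x" unfolding h_def using y0c xm cong_trans by (simp add: cong_def)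
      ultimately show ?thesis by blast
    qed
  qed
  hence "card {1..<p} \<le> card (h ` H)" by (intro card_mono) (simp_all add: H_def)
  also have "\<dots> \<le> card H" by (rule card_image_le) (simp add: H_def)
  finally have "nat (p - 1) \<le> nat ((p-1) div 2)" unfolding H_def by simp
  thus False using assms(2) by simp
qed

lemma char_sum_zero:
  fixes p :: int
  assumes "prime p" "p > 2"
  shows "(\<Sum>x\<in>{0..<p}. Legendre x p) = 0"
proof -
  obtain g where g: "\<not> p dvd g" "\<not> QuadRes p g" using nonresidue_exists[OF assms] by blast
  have lg: "Legendre g p = -1" using g unfolding Legendre_def by (simp add: cong_0_iff)
  have "(\<Sum>x\<in>{0..<p}. Legendre x p) = (\<Sum>x\<in>{0..<p}. Legendre (g*x+0) p)"
    using affine_sum[OF assms(1) g(1), of "\<lambda>x. Legendre x p" 0] Leg_mod by simp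
  also have "\<dots> = - (\<Sum>x\<in>{0..<p}. Legendre x p)"
    using Leg_mult[OF assms] lg by (simp add: sum_negf)
  finally show ?thesis by simp
qed


lemma per_sum:
  fixes p :: int and f :: "int \<Rightarrow> 'a::comm_monoid_add"
  assumes "p > 0" "\<And>x. f (x mod p) = f x"
  shows "(\<Sum>x=1..p. f x) = (\<Sum>x\<in>{0..<p}. f x)"
proof -
  have e1: "{1..p} = insert p {1..<p}" using assms(1) by auto
  have e2: "{0..<p} = insert 0 {1..<p}" using assms(1) by auto
  have "f p = f 0" using assms(2)[of p] by simp
  thus ?thesis unfolding e1 e2 by simp
qed

lemma split0:
  fixes p :: int and f :: "int \<Rightarrow> 'a::comm_monoid_add"
  assumes "p > 0"
  shows "(\<Sum>x\<in>{0..<p}. f x) = f 0 + (\<Sum>x\<in>{1..<p}. f x)"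
proof -
  have e2: "{0..<p} = insert 0 {1..<p}" using assms(1) by auto
  thus ?thesis by simp
qed

lemma Leg_Delta_mod1: "Legendre (Delta n (u mod p) v) p = Legendre (Delta n u v) p"
proof -
  have "[u mod p = u] (mod p)" by (simp add: cong_def)
  hence "[Delta n (u mod p) v = Delta n u v] (mod p)"
    unfolding Delta_def by (intro cong_add cong_mult cong_refl cong_pow)
  thus ?thesis by (rule Leg_cong)
qed

lemma Leg_Delta_mod2: "Legendre (Delta n u (v mod p)) p = Legendre (Delta n u v) p"
proof -
  have "[v mod p = v] (mod p)" by (simp add: cong_def)
  hence "[Delta n u (v mod p) = Delta n u v] (mod p)"
    unfolding Delta_def by (intro cong_add cong_mult cong_refl cong_pow)
  thus ?thesis by (rule Leg_cong)
qed

lemma S_zero: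
  fixes n :: nat and p :: int
  assumes n5: "n \<ge> 5" and n4: "n mod 4 = 1" and pp: "prime p" and pn: "p > int n"
  shows "S n p = 0"
proof -
  have p2: "p > 2" using n5 pn by simp
  have p0: "p > 0" using p2 by simp
  define A where "A = (int n - 1) ^ (n - 1)"
  define B where "B = int n ^ n"
  have oddn: "odd n" using n4 by presburger
  have evn: "even (n - 1)" using oddn by simp
  have DA: "\<not> p dvd A"
  proof
    assume "p dvd A"
    hence "p dvd int n - 1" unfolding A_def using pp prime_dvd_power by blast
    hence "p \<le> int n - 1" using n5 by (intro zdvd_imp_le) auto
    thus False using pn by simp
  qed
  have DB: "\<not> p dvd B"
  proof
    assume "p dvd B"
    hence "p dvd int n" unfolding B_def using pp prime_dvd_power by blast
    hence "p \<le> int n" using n5 by (intro zdvd_imp_le) auto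
    thus False using pn by simp
  qed
  have Dl: "Delta n u v = A * u^n + B * v^(n-1)" for u v unfolding Delta_def A_def B_def by simp
  have chi_nz: "Legendre v p = 1 \<or> Legendre v p = -1" if "\<not> p dvd v" for v
    using Leg_vals[of v p] Leg_zero_iff[of v p] that by auto
  have chi_sq: "Legendre (v^(n-1) * X) p = Legendre X p" if "\<not> p dvd v" for v X
  proof -
    have "Legendre v p ^ (n-1) = 1" using chi_nz[OF that] evn by auto
    thus ?thesis using Leg_mult[OF pp p2] Leg_pow[OF pp p2] by simp
  qed
  have chi_odd: "Legendre (u^n) p = Legendre u p" for u
  proof -
    have "n > 0" using n5 by simp
    hence "Legendre u p ^ n = Legendre u p" using Leg_vals[of u p] oddn by auto
    thus ?thesis using Leg_pow[OF pp p2] by simp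
  qed
  have "S n p = (\<Sum>u=1..p. \<Sum>v\<in>{0..<p}. Legendre (Delta n u v) p)"
    unfolding S_def
    by (intro sum.cong refl per_sum[OF p0]) (rule Leg_Delta_mod2)
  also have "\<dots> = (\<Sum>u\<in>{0..<p}. \<Sum>v\<in>{0..<p}. Legendre (Delta n u v) p)"
    by (intro per_sum[OF p0]) (simp add: Leg_Delta_mod1)
  also have "\<dots> = (\<Sum>v\<in>{0..<p}. \<Sum>u\<in>{0..<p}. Legendre (Delta n u v) p)"
    by (rule sum.swap)
  also have "\<dots> = (\<Sum>u\<in>{0..<p}. Legendre (Delta n u 0) p)
      + (\<Sum>v\<in>{1..<p}. \<Sum>u\<in>{0..<p}. Legendre (Delta n u v) p)"
    by (rule split0[OF p0])
  finally have S1: "S n p = \<dots>" .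
  have part0: "(\<Sum>u\<in>{0..<p}. Legendre (Delta n u 0) p) = 0"
  proof -
    have "(\<Sum>u\<in>{0..<p}. Legendre (Delta n u 0) p) = (\<Sum>u\<in>{0..<p}. Legendre A p * Legendre u p)"
    proof (intro sum.cong refl)
      fix u
      have "Delta n u 0 = A * u^n" using Dl n5 by simp
      thus "Legendre (Delta n u 0) p = Legendre A p * Legendre u p"
        using Leg_mult[OF pp p2] chi_odd by simp
    qed
    also have "\<dots> = Legendre A p * (\<Sum>u\<in>{0..<p}. Legendre u p)" by (simp add: sum_distrib_left)
    also have "\<dots> = 0" using char_sum_zero[OF pp p2] by simp
    finally show ?thesis .
  qed
  have inner: "(\<Sum>u\<in>{0..<p}. Legendre (Delta n u v) p) = (\<Sum>u\<in>{0..<p}. Legendre (A*u^n*v + B) p)"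
    if v: "v \<in> {1..<p}" for v
  proof -
    have nv: "\<not> p dvd v" using v zdvd_not_zless by auto
    have "(\<Sum>u\<in>{0..<p}. Legendre (Delta n u v) p) = (\<Sum>u\<in>{0..<p}. Legendre (Delta n (v*u+0) v) p)"
      using affine_sum[OF pp nv, of "\<lambda>u. Legendre (Delta n u v) p" 0] Leg_Delta_mod1 by simp
    also have "\<dots> = (\<Sum>u\<in>{0..<p}. Legendre (A*u^n*v + B) p)"
    proof (intro sum.cong refl)
      fix u
      have vn: "v^n = v^(n-1) * v" using n5 by (metis Suc_diff_1 less_le_trans not_le not_numeral_le_zero power_Suc2 zero_less_iff_neq_zero)
      have "Delta n (v*u+0) v = v^(n-1) * (A*u^n*v + B)"
        unfolding Dl by (simp add: power_mult_distrib vn algebra_simps)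
      thus "Legendre (Delta n (v*u+0) v) p = Legendre (A*u^n*v + B) p" using chi_sq[OF nv] by simp
    qed
    finally show ?thesis .
  qed
  have "(\<Sum>v\<in>{1..<p}. \<Sum>u\<in>{0..<p}. Legendre (Delta n u v) p)
      = (\<Sum>v\<in>{1..<p}. \<Sum>u\<in>{0..<p}. Legendre (A*u^n*v + B) p)"
    using inner by (rule sum.cong[OF refl])
  also have "\<dots> = (\<Sum>u\<in>{0..<p}. \<Sum>v\<in>{1..<p}. Legendre (A*u^n*v + B) p)"
    by (rule sum.swap)
  also have "\<dots> = (\<Sum>v\<in>{1..<p}. Legendre (A*0^n*v + B) p)
      + (\<Sum>u\<in>{1..<p}. \<Sum>v\<in>{1..<p}. Legendre (A*u^n*v + B) p)"
    by (rule split0[OF p0])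
  also have "\<dots> = (p - 1) * Legendre B p + (\<Sum>u\<in>{1..<p}. - Legendre B p)"
  proof -
    have a: "(\<Sum>v\<in>{1..<p}. Legendre (A*0^n*v + B) p) = (p - 1) * Legendre B p"
    proof -
      have z: "(0::int)^n = 0" using n5 by simp
      have "(\<Sum>v\<in>{1..<p}. Legendre (A*0^n*v + B) p) = (\<Sum>v\<in>{1..<p}. Legendre B p)"
        by (simp only: z) simp
      also have "\<dots> = of_nat (nat (p - 1)) * Legendre B p" by simp
      also have "\<dots> = (p - 1) * Legendre B p" using p0 by simp
      finally show ?thesis .
    qed
    have b: "(\<Sum>v\<in>{1..<p}. Legendre (A*u^n*v + B) p) = - Legendre B p" if u: "u \<in> {1..<p}" for u
    proof -
      have nu: "\<not> p dvd u" using u zdvd_not_zless by auto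
      have nc: "\<not> p dvd A*u^n" using DA nu pp prime_dvd_mult_iff prime_dvd_power by blast
      have "(\<Sum>v\<in>{0..<p}. Legendre (A*u^n*v + B) p) = 0"
        using affine_sum[OF pp nc, of "\<lambda>x. Legendre x p" B] Leg_mod char_sum_zero[OF pp p2] by simp
      thus ?thesis using split0[OF p0, of "\<lambda>v. Legendre (A*u^n*v + B) p"] by simp
    qed
    show ?thesis using a b by simp
  qed
  also have "\<dots> = 0" using p0 by simp
  finally show ?thesis using S1 part0 by simp
qed

theorem lemma1:
  fixes n :: nat
  assumes "n \<ge> 5" and "n mod 4 = 1"
  shows "\<exists>c::real. c > 0 \<and>
           (\<forall>l::int. prime l \<and> odd l \<longrightarrow> \<bar>real_of_int (S n l)\<bar> \<le> c * real_of_int l)"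
proof (intro exI[of _ "real n"] conjI allI impI)
  show "real n > 0" using assms by simp
  fix l :: int assume l: "prime l \<and> odd l"
  have l0: "l > 0" using l prime_gt_0_int by blast
  show "\<bar>real_of_int (S n l)\<bar> \<le> real n * real_of_int l"
  proof (cases "l > int n")
    case True
    thus ?thesis using S_zero[OF assms] l by simp
  next
    case False
    have "\<bar>S n l\<bar> \<le> (\<Sum>u=1..l. \<bar>\<Sum>v = 1..l. Legendre (Delta n u v) l\<bar>)"
      unfolding S_def by (rule sum_abs)
    also have "\<dots> \<le> (\<Sum>u=1..l. \<Sum>v = 1..l. \<bar>Legendre (Delta n u v) l\<bar>)"
      by (intro sum_mono sum_abs)
    also have "\<dots> \<le> (\<Sum>u=1..l. \<Sum>v = 1..l. (1::int))"
    proof (intro sum_mono)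
      fix u v
      have "Legendre (Delta n u v) l \<in> {-1,0,1}" by (rule Leg_vals)
      thus "\<bar>Legendre (Delta n u v) l\<bar> \<le> 1" by auto
    qed
    also have "\<dots> = l * l" using l0 by simp
    also have "\<dots> \<le> int n * l" using False l0 by (intro mult_right_mono) auto
    finally have "\<bar>S n l\<bar> \<le> int n * l" .
    hence "real_of_int \<bar>S n l\<bar> \<le> real_of_int (int n * l)" by linarith
    thus ?thesis by simp
  qed
qed

end
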